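(* Let $\mathcal{M}=(M_i\colon i\in K)$ be a tight family of matroids on a common ground set $E$. Then every covering $(R_i\colon i\in K)$ of $\mathcal{M}$ is a partitioning of $\mathcal{M}$, i.e. the sets $R_i$ are pairwise disjoint, their union is $E$, and each $R_i$ is a base of $M_i$.
   Context: Matroids here are possibly infinite (given by independence axioms: $\emptyset$ independent, subsets of independent sets independent, the augmentation axiom relative to maximal independent sets, and that every independent subset of any $X\subseteq E$ extends to a maximal independent subset of $X$). Bases are maximal independent sets; circuits minimal dependent sets; $X$ spans $e$ if $e\in X$ or some circuit $C\ni e$ has $C\setminus\{e\}\subseteq X$; $S$ is spanning if it spans all of $E$. A covering of $\mathcal{M}$ is a family $(R_i\colon i\in K)$ with $R_i$ independent in $M_i$ and $\bigcup_i R_i=E$. The family $\mathcal{M}$ is tight if it admits a covering and for every covering $(R_i\colon i\in K)$ each $R_i$ is spanning in $M_i$. *)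

theory Defs
  imports Main
begin

text \<open>A (possibly infinite) matroid on ground set E, given by its independence
predicate (independence axioms of Bruhn et al.).\<close>

definition maximal_indep_in :: "('a set \<Rightarrow> bool) \<Rightarrow> 'a set \<Rightarrow> 'a set \<Rightarrow> bool" where
  "maximal_indep_in indep X I \<longleftrightarrow>
     I \<subseteq> X \<and> indep I \<and> (\<forall>J. I \<subseteq> J \<and> J \<subseteq> X \<and> indep J \<longrightarrow> J = I)"

definition matroid :: "'a set \<Rightarrow> ('a set \<Rightarrow> bool) \<Rightarrow> bool" where
  "matroid E indep \<longleftrightarrow>
     (\<forall>I. indep I \<longrightarrow> I \<subseteq> E) \<and>
     indep {} \<and>
     (\<forall>I J. indep J \<and> I \<subseteq> J \<longrightarrow> indep I) \<and>
     (\<forall>I B. indep I \<and> \<not> maximal_indep_in indep E I \<and> maximal_indep_in indep E B \<longrightarrow>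
        (\<exists>x \<in> B - I. indep (insert x I))) \<and>
     (\<forall>X I. X \<subseteq> E \<and> I \<subseteq> X \<and> indep I \<longrightarrow>
        (\<exists>J. I \<subseteq> J \<and> maximal_indep_in indep X J))"

definition base :: "'a set \<Rightarrow> ('a set \<Rightarrow> bool) \<Rightarrow> 'a set \<Rightarrow> bool" where
  "base E indep B \<longleftrightarrow> maximal_indep_in indep E B"

definition circuit :: "'a set \<Rightarrow> ('a set \<Rightarrow> bool) \<Rightarrow> 'a set \<Rightarrow> bool" where
  "circuit E indep C \<longleftrightarrow> C \<subseteq> E \<and> \<not> indep C \<and> (\<forall>D. D \<subset> C \<longrightarrow> indep D)"

definition spans :: "'a set \<Rightarrow> ('a set \<Rightarrow> bool) \<Rightarrow> 'a set \<Rightarrow> 'a \<Rightarrow> bool" where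
  "spans E indep X e \<longleftrightarrow> e \<in> X \<or> (\<exists>C. circuit E indep C \<and> e \<in> C \<and> C - {e} \<subseteq> X)"

definition spanning :: "'a set \<Rightarrow> ('a set \<Rightarrow> bool) \<Rightarrow> 'a set \<Rightarrow> bool" where
  "spanning E indep S \<longleftrightarrow> (\<forall>e \<in> E. spans E indep S e)"

definition covering :: "'a set \<Rightarrow> 'k set \<Rightarrow> ('k \<Rightarrow> 'a set \<Rightarrow> bool) \<Rightarrow> ('k \<Rightarrow> 'a set) \<Rightarrow> bool" where
  "covering E K M R \<longleftrightarrow> (\<forall>i \<in> K. M i (R i)) \<and> (\<Union>i \<in> K. R i) = E"

definition tight :: "'a set \<Rightarrow> 'k set \<Rightarrow> ('k \<Rightarrow> 'a set \<Rightarrow> bool) \<Rightarrow> bool" where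
  "tight E K M \<longleftrightarrow> (\<exists>R. covering E K M R) \<and>
     (\<forall>R. covering E K M R \<longrightarrow> (\<forall>i \<in> K. spanning E (M i) (R i)))"

end

theory Submission
  imports Defs
begin

lemma indep_spanning_base:
  assumes m: "matroid E indep" and I: "indep R" and s: "spanning E indep R"
  shows "base E indep R"
proof -
  have sub: "\<And>I J. indep J \<Longrightarrow> I \<subseteq> J \<Longrightarrow> indep I"
    using m unfolding matroid_def by (metis (no_types))
  have ground: "\<And>I. indep I \<Longrightarrow> I \<subseteq> E"
    using m unfolding matroid_def by (metis (no_types))
  have "J = R" if RJ: "R \<subseteq> J" "J \<subseteq> E" "indep J" for J
  proof (rule ccontr)
    assume "J \<noteq> R"
    then obtain e where e: "e \<in> J" "e \<notin> R" using RJ by blast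
    then have "spans E indep R e" using s RJ unfolding spanning_def by blast
    then obtain C where C: "circuit E indep C" "e \<in> C" "C - {e} \<subseteq> R"
      using e unfolding spans_def by blast
    have "C \<subseteq> J" using C e RJ by blast
    then have "indep C" using sub RJ by blast
    then show False using C unfolding circuit_def by blast
  qed
  then show ?thesis using I ground unfolding base_def maximal_indep_in_def by blast
qed

theorem proposition3p3:
  fixes E :: "'a set" and K :: "'k set" and M :: "'k \<Rightarrow> 'a set \<Rightarrow> bool"
    and R :: "'k \<Rightarrow> 'a set"
  assumes "\<forall>i \<in> K. matroid E (M i)"
    and "tight E K M"
    and "covering E K M R"
  shows "(\<forall>i \<in> K. \<forall>j \<in> K. i \<noteq> j \<longrightarrow> R i \<inter> R j = {})
         \<and> (\<Union>i \<in> K. R i) = E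
         \<and> (\<forall>i \<in> K. base E (M i) (R i))"
proof (intro conjI)
  have span: "\<And>R'. covering E K M R' \<Longrightarrow> \<forall>i\<in>K. spanning E (M i) (R' i)"
    using assms(2) unfolding tight_def by blast
  show "(\<Union>i \<in> K. R i) = E" using assms(3) unfolding covering_def by blast
  show "\<forall>i \<in> K. base E (M i) (R i)"
    using indep_spanning_base assms(1) span[OF assms(3)] assms(3) unfolding covering_def by metis
  show "\<forall>i \<in> K. \<forall>j \<in> K. i \<noteq> j \<longrightarrow> R i \<inter> R j = {}"
  proof (intro ballI impI)
    fix i j assume ij: "i \<in> K" "j \<in> K" "i \<noteq> j"
    show "R i \<inter> R j = {}"
    proof (rule ccontr)
      assume "R i \<inter> R j \<noteq> {}"
      then obtain e where e: "e \<in> R i" "e \<in> R j" by blast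
      define R' where "R' = R(i := R i - {e})"
      have mi: "matroid E (M i)" using assms(1) ij by blast
      have sub: "\<And>I J. M i J \<Longrightarrow> I \<subseteq> J \<Longrightarrow> M i I"
        using mi unfolding matroid_def by (metis (no_types))
      have Ri: "M i (R i)" using assms(3) ij unfolding covering_def by blast
      have "covering E K M R'"
      proof -
        have "\<forall>k\<in>K. M k (R' k)"
          using assms(3) sub[OF Ri, of "R i - {e}"] unfolding covering_def R'_def by auto
        moreover have "(\<Union>k \<in> K. R' k) = (\<Union>k \<in> K. R k)"
          using e ij unfolding R'_def by auto
        ultimately show ?thesis using assms(3) unfolding covering_def by simp
      qed
      then have "spanning E (M i) (R i - {e})" using span ij unfolding R'_def by fastforce
      moreover have "e \<in> E" using e ij assms(3) unfolding covering_def by blast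
      ultimately have "spans E (M i) (R i - {e}) e" unfolding spanning_def by blast
      then obtain C where C: "circuit E (M i) C" "e \<in> C" "C - {e} \<subseteq> R i - {e}"
        unfolding spans_def by blast
      have "C \<subseteq> R i" using C e by blast
      then have "M i C" using sub Ri by blast
      then show False using C unfolding circuit_def by blast
    qed
  qed
qed

end
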